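(* Let $A$ be a unital simple $C^*$-algebra and $\alpha$ a flow of $A$. Let $(u_\infty,u_1,u_2,\ldots)$ be a sequence of $\alpha$-cocycles such that $\lim_{n\to\infty}u_{n,t}=u_{\infty,t}$ uniformly in $t$ on every compact subset of $\mathbb{R}$. Then for any $\epsilon>0$ there exists a sequence $(w_\infty,w_1,w_2,\ldots)$ of invertible elements of $A$ such that $\lim_{n\to\infty}w_n=w_\infty$, $\|w_n-1\|<\epsilon$, and for each $m\in\{\infty,1,2,\ldots\}$ the function $t\mapsto v_{m,t}:=w_m^{-1}u_{m,t}\alpha_t(w_m)$ extends to an entire function $z\mapsto v_{m,z}$ on $\mathbb{C}$, and $\lim_{n\to\infty}v_{n,z}=v_{\infty,z}$ for every $z\in\mathbb{C}$.
   Context: A flow of $A$ is a strongly continuous one-parameter automorphism group $(\alpha_t)_{t\in\mathbb{R}}$ of $A$. An $\alpha$-cocycle is a norm-continuous map $t\mapsto u_t$ from $\mathbb{R}$ into the unitary group of $A$ satisfying $u_s\alpha_s(u_t)=u_{s+t}$ for all $s,t\in\mathbb{R}$. *)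

theory Defs
  imports "HOL-Analysis.Analysis"
begin

text \<open>A unital C*-algebra is modelled on a type 'a carrying a real Banach algebra
structure with unit (norm 1 = 1), together with an explicit complex scalar
multiplication sc (extending scaleR) and an involution st satisfying the C*-identity.\<close>

definition cstar_algebra ::
  "(complex \<Rightarrow> 'a::{real_normed_algebra_1,banach} \<Rightarrow> 'a) \<Rightarrow> ('a \<Rightarrow> 'a) \<Rightarrow> bool" where
  "cstar_algebra sc st \<longleftrightarrow>
     (\<forall>r x. sc (complex_of_real r) x = scaleR r x) \<and>
     (\<forall>a b x. sc (a + b) x = sc a x + sc b x) \<and>
     (\<forall>a x y. sc a (x + y) = sc a x + sc a y) \<and>
     (\<forall>a b x. sc a (sc b x) = sc (a * b) x) \<and>
     (\<forall>a x y. sc a (x * y) = sc a x * y \<and> sc a (x * y) = x * sc a y) \<and>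
     (\<forall>a x. norm (sc a x) = cmod a * norm x) \<and>
     (\<forall>x. st (st x) = x) \<and>
     (\<forall>x y. st (x + y) = st x + st y) \<and>
     (\<forall>a x. st (sc a x) = sc (cnj a) (st x)) \<and>
     (\<forall>x y. st (x * y) = st y * st x) \<and>
     (\<forall>x. norm (st x * x) = (norm x)\<^sup>2)"

definition closed_ideal ::
  "(complex \<Rightarrow> 'a::{real_normed_algebra_1,banach} \<Rightarrow> 'a) \<Rightarrow> 'a set \<Rightarrow> bool" where
  "closed_ideal sc I \<longleftrightarrow> closed I \<and> 0 \<in> I \<and>
     (\<forall>x\<in>I. \<forall>y\<in>I. x + y \<in> I) \<and>
     (\<forall>a. \<forall>x\<in>I. sc a x \<in> I) \<and>
     (\<forall>x\<in>I. \<forall>y. x * y \<in> I \<and> y * x \<in> I)"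

definition simple_cstar ::
  "(complex \<Rightarrow> 'a::{real_normed_algebra_1,banach} \<Rightarrow> 'a) \<Rightarrow> ('a \<Rightarrow> 'a) \<Rightarrow> bool" where
  "simple_cstar sc st \<longleftrightarrow> cstar_algebra sc st \<and>
     (\<forall>I. closed_ideal sc I \<longrightarrow> I = {0} \<or> I = UNIV)"

definition star_automorphism ::
  "(complex \<Rightarrow> 'a::{real_normed_algebra_1,banach} \<Rightarrow> 'a) \<Rightarrow> ('a \<Rightarrow> 'a) \<Rightarrow> ('a \<Rightarrow> 'a) \<Rightarrow> bool" where
  "star_automorphism sc st f \<longleftrightarrow> bij f \<and>
     (\<forall>x y. f (x + y) = f x + f y) \<and>
     (\<forall>a x. f (sc a x) = sc a (f x)) \<and>
     (\<forall>x y. f (x * y) = f x * f y) \<and>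
     (\<forall>x. f (st x) = st (f x))"

definition flow ::
  "(complex \<Rightarrow> 'a::{real_normed_algebra_1,banach} \<Rightarrow> 'a) \<Rightarrow> ('a \<Rightarrow> 'a) \<Rightarrow> (real \<Rightarrow> 'a \<Rightarrow> 'a) \<Rightarrow> bool" where
  "flow sc st \<alpha> \<longleftrightarrow> (\<forall>t. star_automorphism sc st (\<alpha> t)) \<and>
     \<alpha> 0 = id \<and> (\<forall>s t. \<alpha> (s + t) = \<alpha> s \<circ> \<alpha> t) \<and>
     (\<forall>a. continuous_on UNIV (\<lambda>t. \<alpha> t a))"

definition unitary :: "('a::real_normed_algebra_1 \<Rightarrow> 'a) \<Rightarrow> 'a \<Rightarrow> bool" where
  "unitary st x \<longleftrightarrow> st x * x = 1 \<and> x * st x = 1"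

definition cocycle ::
  "('a::{real_normed_algebra_1,banach} \<Rightarrow> 'a) \<Rightarrow> (real \<Rightarrow> 'a \<Rightarrow> 'a) \<Rightarrow> (real \<Rightarrow> 'a) \<Rightarrow> bool" where
  "cocycle st \<alpha> u \<longleftrightarrow> continuous_on UNIV u \<and> (\<forall>t. unitary st (u t)) \<and>
     (\<forall>s t. u s * \<alpha> s (u t) = u (s + t))"

definition entire_fun ::
  "(complex \<Rightarrow> 'a::{real_normed_algebra_1,banach} \<Rightarrow> 'a) \<Rightarrow> (complex \<Rightarrow> 'a) \<Rightarrow> bool" where
  "entire_fun sc f \<longleftrightarrow>
     (\<forall>z. \<exists>D. ((\<lambda>h. sc (inverse h) (f (z + h) - f z)) \<longlongrightarrow> D) (at 0))"

end

theory Submission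
  imports Defs "HOL-Probability.Distributions" "HOL-Computational_Algebra.Formal_Power_Series"
begin

locale cstar =
  fixes sc :: "complex \<Rightarrow> 'a::{real_normed_algebra_1,banach} \<Rightarrow> 'a"
    and st :: "'a \<Rightarrow> 'a"
  assumes cs: "cstar_algebra sc st"
begin

lemma sc_real: "sc (complex_of_real r) x = r *\<^sub>R x" using cs unfolding cstar_algebra_def by metis
lemma sc_add1: "sc (a + b) x = sc a x + sc b x" using cs unfolding cstar_algebra_def by metis
lemma sc_add2: "sc a (x + y) = sc a x + sc a y" using cs unfolding cstar_algebra_def by metis
lemma sc_sc: "sc a (sc b x) = sc (a * b) x" using cs unfolding cstar_algebra_def by metis
lemma sc_multL: "sc a (x * y) = sc a x * y" using cs unfolding cstar_algebra_def by metis
lemma sc_multR: "sc a (x * y) = x * sc a y" using cs unfolding cstar_algebra_def by metis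
lemma norm_sc: "norm (sc a x) = cmod a * norm x" using cs unfolding cstar_algebra_def by metis
lemma st_st[simp]: "st (st x) = x" using cs unfolding cstar_algebra_def by metis
lemma st_add: "st (x + y) = st x + st y" using cs unfolding cstar_algebra_def by metis
lemma st_sc: "st (sc a x) = sc (cnj a) (st x)" using cs unfolding cstar_algebra_def by metis
lemma st_mult: "st (x * y) = st y * st x" using cs unfolding cstar_algebra_def by metis
lemma cstar_id: "norm (st x * x) = (norm x)\<^sup>2" using cs unfolding cstar_algebra_def by metis

lemma sc_one[simp]: "sc 1 x = x" using sc_real[of 1 x] by simp
lemma sc_zero1[simp]: "sc 0 x = 0" using sc_real[of 0 x] by simp
lemma sc_zero2[simp]: "sc a 0 = 0" using norm_sc[of a 0] by simp
lemma sc_minus1: "sc (- a) x = - sc a x"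
  using sc_add1[of a "-a" x] by (simp add: minus_unique)
lemma sc_minus2: "sc a (- x) = - sc a x"
  using sc_add2[of a x "-x"] by (simp add: minus_unique)
lemma sc_diff1: "sc (a - b) x = sc a x - sc b x"
  using sc_add1[of a "-b" x] sc_minus1 by simp
lemma sc_diff2: "sc a (x - y) = sc a x - sc a y"
  using sc_add2[of a x "-y"] sc_minus2 by simp
lemma sc_scaleR2: "sc a (r *\<^sub>R x) = r *\<^sub>R sc a x"
  by (metis mult.commute sc_real sc_sc)
lemma sc_scaleR1: "sc (r *\<^sub>R a) x = r *\<^sub>R sc a x"
  by (metis sc_real sc_sc scaleR_conv_of_real)
lemma sc_of_real_mult: "sc (complex_of_real r * a) x = r *\<^sub>R sc a x"
  by (metis sc_scaleR1 scaleR_conv_of_real)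

lemma bounded_linear_sc2: "bounded_linear (sc a)"
  by (rule bounded_linear_intro[where K="cmod a"]) (auto simp: sc_add2 sc_scaleR2 norm_sc)
lemma bounded_linear_sc1: "bounded_linear (\<lambda>c. sc c x)"
  by (rule bounded_linear_intro[where K="norm x"]) (auto simp: sc_add1 sc_scaleR1 norm_sc mult.commute)
lemma bounded_bilinear_sc: "bounded_bilinear sc"
  by (rule bounded_bilinear.intro) (auto simp: sc_add1 sc_add2 sc_scaleR1 sc_scaleR2 norm_sc intro!: exI[of _ 1])

lemma st_zero[simp]: "st 0 = 0" using st_add[of 0 0] by simp
lemma st_minus: "st (- x) = - st x" using st_add[of x "-x"] by (simp add: minus_unique)
lemma st_diff: "st (x - y) = st x - st y" using st_add[of x "-y"] st_minus by simp
lemma st_scaleR: "st (r *\<^sub>R x) = r *\<^sub>R st x"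
  by (metis complex_cnj_complex_of_real sc_real st_sc)
lemma st_one[simp]: "st 1 = 1"
proof -
  have "st 1 = st 1 * st (st 1)" by simp
  also have "\<dots> = st (st 1 * 1)" by (simp only: st_mult)
  also have "\<dots> = 1" by simp
  finally show ?thesis .
qed
lemma norm_st[simp]: "norm (st x) = norm x"
proof -
  have le: "norm y \<le> norm (st y)" for y
  proof (cases "y = 0")
    case False
    have "(norm y)^2 \<le> norm (st y) * norm y" using cstar_id[of y] norm_mult_ineq[of "st y" y] by simp
    then show ?thesis using False by (simp add: power2_eq_square)
  qed simp
  show ?thesis using le[of x] le[of "st x"] by simp
qed
lemma bounded_linear_st: "bounded_linear st"
  by (rule bounded_linear_intro[where K=1]) (auto simp: st_add st_scaleR)
lemma st_power: "st (x ^ n) = (st x) ^ n"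
  by (induction n) (auto simp: st_mult power_commutes)

lemma unitary_norm: assumes "st v * v = 1" shows "norm v = 1"
proof -
  have "(norm v)^2 = 1^2" using cstar_id[of v] assms by simp
  then show ?thesis using power2_eq_imp_eq[of "norm v" 1] by simp
qed

end

lemma binom_half_abs_summable:
  fixes r :: real assumes "0 \<le> r" "r < 1"
  shows "summable (\<lambda>k. \<bar>(1/2::real) gchoose k\<bar> * r ^ k)"
proof -
  define q where "q = (1 + r) / 2"
  have q: "\<bar>q\<bar> < 1" "r < q" using assms by (auto simp: q_def)
  have "summable (\<lambda>n. ((1/2::real) gchoose n) * q ^ n)"
    using gen_binomial_real[OF q(1), of "1/2"] by (simp add: sums_iff)
  from powser_insidea[OF this, of r] q assms
  have "summable (\<lambda>n. norm (((1/2::real) gchoose n) * r ^ n))" by simp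
  then show ?thesis using assms by (simp add: abs_mult)
qed

lemma one_gchoose: "((1::real) gchoose k) = (if k = 0 \<or> k = 1 then 1 else 0)"
proof -
  have "(of_nat (1 choose k)::real) = of_nat 1 gchoose k"
    by (rule binomial_gbinomial)
  then have "((1::real) gchoose k) = of_nat (1 choose k)" by simp
  then show ?thesis by (cases k) (auto simp: binomial_eq_0)
qed

context cstar
begin

lemma sqrt_exists:
  assumes sa: "st h = h" and hn: "norm h < 1"
  shows "\<exists>S. st S = S \<and> S * S = 1 - h * h \<and> h * S = S * h"
proof -
  define a where "a = h * h"
  have sa_a: "st a = a" using sa by (simp add: a_def st_mult)
  have an: "norm a < 1"
  proof -
    have "norm h * norm h \<le> norm h * 1" using hn by (intro mult_left_mono) auto
    then show ?thesis using norm_mult_ineq[of h h] hn by (simp add: a_def)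
  qed
  define c where "c k = ((1/2::real) gchoose k) * (-1)^k" for k
  define T where "T k = c k *\<^sub>R a ^ k" for k
  have sumc: "summable (\<lambda>k. \<bar>c k\<bar> * norm a ^ k)"
    using binom_half_abs_summable[of "norm a"] an by (simp add: c_def abs_mult)
  have sumT: "summable (\<lambda>k. norm (T k))"
  proof (rule summable_comparison_test[OF _ sumc])
    show "\<exists>N. \<forall>n\<ge>N. norm (norm (T n)) \<le> \<bar>c n\<bar> * norm a ^ n"
      by (auto simp: T_def intro!: mult_left_mono norm_power_ineq)
  qed
  then have sT: "summable T" by (rule summable_norm_cancel)
  define S where "S = suminf T"
  have "S * S = (\<Sum>k. \<Sum>i\<le>k. T i * T (k - i))"
    unfolding S_def by (rule Cauchy_product[OF sumT sumT])
  also have "\<dots> = (\<Sum>k. (if k = 0 then 1 else if k = 1 then - a else 0))"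
  proof (rule arg_cong[where f=suminf], rule ext)
    fix k
    have "(\<Sum>i\<le>k. T i * T (k - i)) = (\<Sum>i\<le>k. (c i * c (k - i)) *\<^sub>R a ^ k)"
    proof (rule sum.cong[OF refl])
      fix i assume "i \<in> {..k}"
      then have "a ^ i * a ^ (k - i) = a ^ k" by (simp flip: power_add)
      then show "T i * T (k - i) = (c i * c (k - i)) *\<^sub>R a ^ k"
        by (simp add: T_def)
    qed
    also have "\<dots> = (\<Sum>i\<le>k. c i * c (k - i)) *\<^sub>R a ^ k"
      by (simp add: scaleR_sum_left)
    also have "(\<Sum>i\<le>k. c i * c (k - i)) = (-1)^k * (\<Sum>i\<le>k. ((1/2::real) gchoose i) * ((1/2) gchoose (k - i)))"
      unfolding sum_distrib_left
    proof (rule sum.cong[OF refl])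
      fix i assume "i \<in> {..k}"
      then have e: "(-1::real)^i * (-1)^(k-i) = (-1)^k" by (simp flip: power_add)
      have "c i * c (k - i) = ((-1::real)^i * (-1)^(k-i)) * (((1/2::real) gchoose i) * ((1/2) gchoose (k - i)))"
        unfolding c_def by (simp only: mult_ac)
      then show "c i * c (k - i) = (-1) ^ k * (((1/2::real) gchoose i) * ((1/2) gchoose (k - i)))"
        by (simp only: e)
    qed
    also have "(\<Sum>i\<le>k. ((1/2::real) gchoose i) * ((1/2) gchoose (k - i))) = (1::real) gchoose k"
      using gbinomial_Vandermonde[of "1/2::real" "1/2" k] by (simp add: atMost_atLeast0)
    finally show "(\<Sum>i\<le>k. T i * T (k - i)) = (if k = 0 then 1 else if k = 1 then - a else 0)"
      by (auto simp: one_gchoose)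
  qed
  also have "\<dots> = (\<Sum>k\<in>{0,1::nat}. (if k = 0 then 1 else if k = 1 then - a else 0))"
    using suminf_finite[of "{0,1::nat}" "\<lambda>k. if k = 0 then (1::'a) else if k = 1 then - a else 0"] by simp
  also have "\<dots> = 1 - a" by simp
  finally have SS: "S * S = 1 - h * h" by (simp add: a_def)
  have "st S = (\<Sum>k. st (T k))"
    unfolding S_def by (rule bounded_linear.suminf[OF bounded_linear_st sT])
  also have "(\<lambda>k. st (T k)) = T"
    by (auto simp: T_def st_scaleR st_power sa_a)
  finally have stS: "st S = S" by (simp add: S_def)
  have "h * S = (\<Sum>k. h * T k)" unfolding S_def by (rule suminf_mult[OF sT, symmetric])
  also have "(\<lambda>k. h * T k) = (\<lambda>k. T k * h)"
  proof
    fix k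
    have "h * a ^ k = a ^ k * h"
      by (metis a_def mult.assoc power_commuting_commutes)
    then show "h * T k = T k * h" by (simp add: T_def)
  qed
  also have "(\<Sum>k. T k * h) = S * h" unfolding S_def by (rule suminf_mult2[OF sT, symmetric])
  finally show ?thesis using SS stS by blast
qed


lemma selfadj_unitary:
  assumes sa: "st h = h" and hn: "norm h < 1"
  shows "\<exists>U. st U * U = 1 \<and> U * st U = 1 \<and> h = (1/2) *\<^sub>R (U + st U)"
proof -
  obtain S where S: "st S = S" "S * S = 1 - h * h" "h * S = S * h"
    using sqrt_exists[OF sa hn] by blast
  define U where "U = h + sc \<i> S"
  have stU: "st U = h - sc \<i> S"
    by (simp add: U_def st_add st_sc sa S(1) sc_minus1)
  have iSiS: "sc \<i> S * sc \<i> S = - (S * S)"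
    by (simp add: sc_multL[symmetric] sc_multR[symmetric] sc_sc sc_minus1[of 1, simplified])
  have hiS: "h * sc \<i> S = sc \<i> S * h"
    by (simp add: sc_multL[symmetric] sc_multR[symmetric] S(3))
  have "st U * U = h * h + (h * sc \<i> S - sc \<i> S * h) - sc \<i> S * sc \<i> S"
    unfolding stU by (simp add: U_def algebra_simps)
  also have "\<dots> = 1" using iSiS hiS S(2) by simp
  finally have 1: "st U * U = 1" .
  have "U * st U = h * h - (h * sc \<i> S - sc \<i> S * h) - sc \<i> S * sc \<i> S"
    unfolding stU by (simp add: U_def algebra_simps)
  also have "\<dots> = 1" using iSiS hiS S(2) by simp
  finally have 2: "U * st U = 1" .
  have "U + st U = 2 *\<^sub>R h" unfolding stU by (simp add: U_def scaleR_2)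
  then have "h = (1/2) *\<^sub>R (U + st U)" by simp
  with 1 2 show ?thesis by blast
qed

lemma star_hom_bounded:
  assumes add: "\<And>x y. \<phi> (x + y) = \<phi> x + \<phi> y"
    and scl: "\<And>a x. \<phi> (sc a x) = sc a (\<phi> x)"
    and mul: "\<And>x y. \<phi> (x * y) = \<phi> x * \<phi> y"
    and star: "\<And>x. \<phi> (st x) = st (\<phi> x)"
    and one: "\<phi> 1 = 1"
  shows "bounded_linear \<phi>"
proof -
  have sR: "\<phi> (r *\<^sub>R x) = r *\<^sub>R \<phi> x" for r x
    using scl[of "complex_of_real r" x] by (simp add: sc_real)
  have sa_bound: "norm (\<phi> h) \<le> 1" if hh: "st h = h" "norm h < 1" for h
  proof -
    obtain U where U: "st U * U = 1" "U * st U = 1" "h = (1/2) *\<^sub>R (U + st U)"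
      using selfadj_unitary[OF hh] by blast
    have "st (\<phi> U) * \<phi> U = 1" using U(1) by (metis mul one star)
    then have nU: "norm (\<phi> U) = 1" by (rule unitary_norm)
    have "\<phi> h = (1/2) *\<^sub>R (\<phi> U + st (\<phi> U))" using U(3) by (simp add: sR add star)
    then have "norm (\<phi> h) = (1/2) * norm (\<phi> U + st (\<phi> U))"
      by simp
    also have "\<dots> \<le> (1/2) * (norm (\<phi> U) + norm (st (\<phi> U)))"
      by (intro mult_left_mono norm_triangle_ineq) auto
    finally have "norm (\<phi> h) \<le> (1/2) * (norm (\<phi> U) + norm (st (\<phi> U)))" .
    then show ?thesis using nU by simp
  qed
  have small: "norm (\<phi> x) \<le> 2" if "norm x < 1" for x
  proof -
    define h1 where "h1 = (1/2) *\<^sub>R (x + st x)"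
    define h2 where "h2 = sc (- \<i> / 2) (x - st x)"
    have st1: "st h1 = h1" by (simp add: h1_def st_scaleR st_add add.commute)
    have st2: "st h2 = h2"
    proof -
      have "st h2 = sc (\<i> / 2) (st x - x)" by (simp add: h2_def st_sc st_diff)
      also have "\<dots> = sc (- \<i> / 2) (x - st x)"
        by (metis minus_diff_eq minus_divide_left sc_minus1 sc_minus2)
      finally show ?thesis by (simp add: h2_def)
    qed
    have n1: "norm h1 < 1"
    proof -
      have "norm h1 = (1/2) * norm (x + st x)" by (simp add: h1_def)
      also have "\<dots> \<le> (1/2) * (norm x + norm (st x))"
        by (intro mult_left_mono norm_triangle_ineq) auto
      finally have "norm h1 \<le> (1/2) * (norm x + norm (st x))" .
      then show ?thesis using that by simp
    qed
    have n2: "norm h2 < 1"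
    proof -
      have "norm h2 = (1/2) * norm (x - st x)" by (simp add: h2_def norm_sc norm_divide)
      also have "\<dots> \<le> (1/2) * (norm x + norm (st x))"
        by (intro mult_left_mono norm_triangle_ineq4) auto
      finally show ?thesis using that by simp
    qed
    have xdec: "x = h1 + sc \<i> h2"
    proof -
      have "sc \<i> h2 = sc (1/2) (x - st x)" by (simp add: h2_def sc_sc)
      also have "\<dots> = (1/2) *\<^sub>R (x - st x)" using sc_real[of "1/2"] by simp
      finally have e: "sc \<i> h2 = (1/2) *\<^sub>R x - (1/2) *\<^sub>R st x" by (simp add: scaleR_diff_right)
      have xx: "x = (1/2) *\<^sub>R x + (1/2) *\<^sub>R x" by (simp flip: scaleR_add_left)
      show ?thesis unfolding e h1_def scaleR_add_right by (subst xx) (simp add: algebra_simps)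
    qed
    have "\<phi> x = \<phi> h1 + sc \<i> (\<phi> h2)" using xdec by (simp add: add scl)
    then have "norm (\<phi> x) \<le> norm (\<phi> h1) + norm (\<phi> h2)"
      by (metis norm_sc norm_ii mult_1 norm_triangle_ineq)
    then show ?thesis using sa_bound[OF st1 n1] sa_bound[OF st2 n2] by simp
  qed
  show ?thesis
  proof (rule bounded_linear_intro[where K=4])
    show "\<phi> (x + y) = \<phi> x + \<phi> y" for x y by (rule add)
    show "\<phi> (r *\<^sub>R x) = r *\<^sub>R \<phi> x" for r x by (rule sR)
    show "norm (\<phi> x) \<le> norm x * 4" for x
    proof (cases "x = 0")
      case True
      then have "\<phi> x = 0" using sR[of 0 x] by simp
      then show ?thesis by simp
    next
      case False
      define y where "y = (1 / (2 * norm x)) *\<^sub>R x"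
      have "norm y = 1/2" using False by (simp add: y_def)
      then have "norm (\<phi> y) \<le> 2" using small by simp
      moreover have "\<phi> x = (2 * norm x) *\<^sub>R \<phi> y" using False by (simp add: y_def sR)
      ultimately show ?thesis
        by (simp add: mult.commute[of _ 2]) (metis mult.commute mult_left_mono norm_ge_zero)
    qed
  qed
qed

end

lemma neumann:
  fixes w :: "'a::{real_normed_algebra_1,banach}"
  assumes n: "norm (1 - w) < 1"
  shows "\<exists>wi. w * wi = 1 \<and> wi * w = 1 \<and> norm wi \<le> 1 / (1 - norm (1 - w))"
proof -
  define x where "x = 1 - w"
  have nx: "norm x < 1" using n by (simp add: x_def)
  have sg: "summable (\<lambda>k. norm x ^ k)" using nx by (simp add: summable_geometric)
  have sn: "summable (\<lambda>k. norm (x ^ k))"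
    by (rule summable_comparison_test[OF _ sg]) (auto intro: norm_power_ineq)
  then have s: "summable (\<lambda>k. x ^ k)" by (rule summable_norm_cancel)
  define S where "S = (\<Sum>k. x ^ k)"
  have xS: "x * S = S - 1"
  proof -
    have "x * S = (\<Sum>k. x * x ^ k)" unfolding S_def by (rule suminf_mult[OF s, symmetric])
    also have "\<dots> = (\<Sum>k. x ^ Suc k)" by simp
    also have "\<dots> = S - x ^ 0" unfolding S_def by (rule suminf_split_head[OF s])
    finally show ?thesis by simp
  qed
  have Sx: "S * x = S - 1"
  proof -
    have "S * x = (\<Sum>k. x ^ k * x)" unfolding S_def by (rule suminf_mult2[OF s])
    also have "\<dots> = (\<Sum>k. x ^ Suc k)" by (simp add: power_commutes)
    also have "\<dots> = S - x ^ 0" unfolding S_def by (rule suminf_split_head[OF s])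
    finally show ?thesis by simp
  qed
  have "w * S = 1" using xS by (simp add: x_def algebra_simps)
  moreover have "S * w = 1" using Sx by (simp add: x_def algebra_simps)
  moreover have "norm S \<le> 1 / (1 - norm x)"
  proof -
    have "norm S \<le> (\<Sum>k. norm (x ^ k))" unfolding S_def by (rule summable_norm[OF sn])
    also have "\<dots> \<le> (\<Sum>k. norm x ^ k)" by (rule suminf_le[OF _ sn sg]) (simp add: norm_power_ineq)
    also have "\<dots> = 1 / (1 - norm x)" using suminf_geometric[of "norm x"] nx by simp
    finally show ?thesis .
  qed
  ultimately show ?thesis by (auto simp: x_def)
qed

lemma ball_sub_Icc:
  fixes B :: real assumes "0 < B"
  shows "ball 0 B \<subseteq> {a..b} \<longleftrightarrow> a \<le> -B \<and> B \<le> b"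
proof
  assume h: "ball 0 B \<subseteq> {a..b}"
  have "closure (ball (0::real) B) \<subseteq> {a..b}" by (rule closure_minimal[OF h]) auto
  then have "cball 0 B \<subseteq> {a..b}" using assms by simp
  moreover have "-B \<in> cball 0 B" "B \<in> cball 0 B" using assms by (auto simp: dist_real_def)
  ultimately have "-B \<in> {a..b}" "B \<in> {a..b}" by blast+
  then show "a \<le> -B \<and> B \<le> b" by auto
next
  assume "a \<le> -B \<and> B \<le> b"
  then show "ball 0 B \<subseteq> {a..b}" by (auto simp: dist_real_def)
qed

lemma dom_integrable:
  fixes f :: "real \<Rightarrow> 'a::banach"
  assumes cf: "continuous_on UNIV f" and g: "g integrable_on UNIV"
    and le: "\<And>s. norm (f s) \<le> g s"
  shows "f integrable_on UNIV"
proof -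
  have fi: "f integrable_on {a..b}" for a b
    by (rule integrable_continuous_real) (rule continuous_on_subset[OF cf], auto)
  have gi: "g integrable_on {a..b}" for a b
    using integrable_on_subcbox[OF g, of a b] by simp
  from g have gC: "\<forall>e>0. \<exists>B>0. \<forall>a b c d. ball 0 B \<subseteq> cbox a b \<and> ball 0 B \<subseteq> cbox c d \<longrightarrow>
      norm (integral (cbox a b) g - integral (cbox c d) g) < e"
    unfolding integrable_alt[of g UNIV] by simp
  have key: "norm (integral {a..b} f - integral {-B..B} f) < e/2"
    if B: "0 < B" "\<forall>a b c d. ball 0 B \<subseteq> cbox a b \<and> ball 0 B \<subseteq> cbox c d \<longrightarrow>
      norm (integral (cbox a b) g - integral (cbox c d) g) < e/2"
    and ab: "ball 0 B \<subseteq> {a..b}" for a b B e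
  proof -
    have ab': "a \<le> -B" "B \<le> b" using ab ball_sub_Icc[OF B(1)] by auto
    have "integral {a..b} f = integral {a..-B} f + integral {-B..b} f"
      using Henstock_Kurzweil_Integration.integral_combine[OF ab'(1) _ fi, of b] ab' B by simp
    moreover have "integral {-B..b} f = integral {-B..B} f + integral {B..b} f"
      using Henstock_Kurzweil_Integration.integral_combine[of "-B" B b f] ab' B fi by simp
    ultimately have ef: "integral {a..b} f - integral {-B..B} f = integral {a..-B} f + integral {B..b} f"
      by simp
    have "integral {a..b} g = integral {a..-B} g + integral {-B..b} g"
      using Henstock_Kurzweil_Integration.integral_combine[OF ab'(1) _ gi, of b] ab' B by simp
    moreover have "integral {-B..b} g = integral {-B..B} g + integral {B..b} g"
      using Henstock_Kurzweil_Integration.integral_combine[of "-B" B b g] ab' B gi by simp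
    ultimately have eg: "integral {a..b} g - integral {-B..B} g = integral {a..-B} g + integral {B..b} g"
      by simp
    have "norm (integral {a..b} f - integral {-B..B} f) \<le> norm (integral {a..-B} f) + norm (integral {B..b} f)"
      unfolding ef by (rule norm_triangle_ineq)
    also have "\<dots> \<le> integral {a..-B} g + integral {B..b} g"
      by (intro add_mono integral_norm_bound_integral fi gi le)
    also have "\<dots> = integral {a..b} g - integral {-B..B} g" using eg by simp
    also have "\<dots> < e/2"
    proof -
      have "ball 0 B \<subseteq> cbox (-B) B" using ball_sub_Icc[OF B(1), of "-B" B] by simp
      then have "norm (integral (cbox a b) g - integral (cbox (-B) B) g) < e/2"
        using B(2) ab by auto
      then have "\<bar>integral {a..b} g - integral {-B..B} g\<bar> < e/2" by simp
      then show ?thesis by linarith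
    qed
    finally show ?thesis .
  qed
  show ?thesis
    unfolding integrable_alt[of f UNIV]
  proof (intro conjI allI impI)
    fix a b show "(\<lambda>x. if x \<in> UNIV then f x else 0) integrable_on cbox a b" using fi by simp
  next
    fix e :: real assume e: "0 < e"
    then obtain B where B: "0 < B" "\<forall>a b c d. ball 0 B \<subseteq> cbox a b \<and> ball 0 B \<subseteq> cbox c d \<longrightarrow>
      norm (integral (cbox a b) g - integral (cbox c d) g) < e/2"
      using gC[rule_format, of "e/2"] by auto
    show "\<exists>B>0. \<forall>a b c d. ball 0 B \<subseteq> cbox a b \<and> ball 0 B \<subseteq> cbox c d \<longrightarrow>
      norm (integral (cbox a b) (\<lambda>x. if x \<in> UNIV then f x else 0) -
            integral (cbox c d) (\<lambda>x. if x \<in> UNIV then f x else 0)) < e"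
    proof (intro exI[of _ B] conjI allI impI B(1))
      fix a b c d :: real
      assume h: "ball 0 B \<subseteq> cbox a b \<and> ball 0 B \<subseteq> cbox c d"
      have 1: "norm (integral {a..b} f - integral {-B..B} f) < e/2" using key[OF B] h by simp
      have 2: "norm (integral {c..d} f - integral {-B..B} f) < e/2" using key[OF B] h by simp
      have "norm (integral {a..b} f - integral {c..d} f) < e"
        using norm_triangle_lt[of "integral {a..b} f - integral {-B..B} f" "integral {-B..B} f - integral {c..d} f" e]
          1 2 by (simp add: norm_minus_commute)
      then show "norm (integral (cbox a b) (\<lambda>x. if x \<in> UNIV then f x else 0) -
            integral (cbox c d) (\<lambda>x. if x \<in> UNIV then f x else 0)) < e" by simp
    qed
  qed
qed

lemma has_integral_UNIV_shift:
  fixes f :: "real \<Rightarrow> 'a::banach"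
  assumes "(f has_integral i) UNIV"
  shows "((\<lambda>x. f (x + t)) has_integral i) UNIV"
proof -
  from assms have A: "\<And>a b. f integrable_on cbox a b"
    and E: "\<And>e. e > 0 \<Longrightarrow> \<exists>B>0. \<forall>a b. ball 0 B \<subseteq> cbox a b \<longrightarrow> norm (integral (cbox a b) f - i) < e"
    unfolding has_integral_alt'[of f] by auto
  have sh: "(\<lambda>x. f (x + t)) = f \<circ> ((+) t)" by (auto simp: add.commute)
  show ?thesis
    unfolding has_integral_alt'[of "\<lambda>x. f (x + t)"]
  proof (intro conjI allI impI)
    fix a b :: real
    show "(\<lambda>x. if x \<in> UNIV then f (x + t) else 0) integrable_on cbox a b"
      using integrable_on_shift_cbox[of f t a b] A sh by simp
  next
    fix e :: real assume e: "0 < e"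
    then obtain B where B: "0 < B" "\<forall>a b. ball 0 B \<subseteq> cbox a b \<longrightarrow> norm (integral (cbox a b) f - i) < e"
      using E by blast
    show "\<exists>B>0. \<forall>a b. ball 0 B \<subseteq> cbox a b \<longrightarrow>
            norm (integral (cbox a b) (\<lambda>x. if x \<in> UNIV then f (x + t) else 0) - i) < e"
    proof (intro exI[of _ "B + \<bar>t\<bar>"] conjI allI impI)
      show "0 < B + \<bar>t\<bar>" using B by simp
      fix a b :: real assume h: "ball 0 (B + \<bar>t\<bar>) \<subseteq> cbox a b"
      then have "a \<le> -(B + \<bar>t\<bar>)" "B + \<bar>t\<bar> \<le> b" using ball_sub_Icc[of "B + \<bar>t\<bar>" a b] B by auto
      then have "ball 0 B \<subseteq> cbox (a + t) (b + t)" using ball_sub_Icc[of B "a+t" "b+t"] B by auto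
      then have "norm (integral (cbox (a + t) (b + t)) f - i) < e" using B by blast
      moreover have "integral (cbox a b) (\<lambda>x. if x \<in> UNIV then f (x + t) else 0) = integral (cbox (a + t) (b + t)) f"
        using integral_shift_cbox_plus[of a b f t] sh by simp
      ultimately show "norm (integral (cbox a b) (\<lambda>x. if x \<in> UNIV then f (x + t) else 0) - i) < e" by simp
    qed
  qed
qed

definition Kc :: "real \<Rightarrow> complex \<Rightarrow> complex" where
  "Kc \<sigma> \<zeta> = complex_of_real (1 / sqrt (2 * pi * \<sigma>\<^sup>2)) * exp (- (\<zeta>\<^sup>2) / complex_of_real (2 * \<sigma>\<^sup>2))"
definition K1 :: "real \<Rightarrow> complex \<Rightarrow> complex" where
  "K1 \<sigma> \<zeta> = - (\<zeta> / complex_of_real (\<sigma>\<^sup>2)) * Kc \<sigma> \<zeta>"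
definition K2 :: "real \<Rightarrow> complex \<Rightarrow> complex" where
  "K2 \<sigma> \<zeta> = (\<zeta>\<^sup>2 / (complex_of_real (\<sigma>\<^sup>2))\<^sup>2 - 1 / complex_of_real (\<sigma>\<^sup>2)) * Kc \<sigma> \<zeta>"

lemma Kc_deriv: assumes "\<sigma> \<noteq> 0" shows "(Kc \<sigma> has_field_derivative K1 \<sigma> \<zeta>) (at \<zeta>)"
proof -
  have "(Kc \<sigma> has_field_derivative complex_of_real (1 / sqrt (2 * pi * \<sigma>\<^sup>2)) *
     (exp (- (\<zeta>\<^sup>2) / complex_of_real (2 * \<sigma>\<^sup>2)) * (- (2 * \<zeta>) / complex_of_real (2 * \<sigma>\<^sup>2)))) (at \<zeta>)"
    unfolding Kc_def[abs_def] using assms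
    by (auto intro!: derivative_eq_intros simp: power2_eq_square)
  moreover have "complex_of_real (1 / sqrt (2 * pi * \<sigma>\<^sup>2)) *
     (exp (- (\<zeta>\<^sup>2) / complex_of_real (2 * \<sigma>\<^sup>2)) * (- (2 * \<zeta>) / complex_of_real (2 * \<sigma>\<^sup>2))) = K1 \<sigma> \<zeta>"
    using assms by (simp add: K1_def Kc_def field_simps)
  ultimately show ?thesis by simp
qed

lemma K1_deriv: assumes "\<sigma> \<noteq> 0" shows "(K1 \<sigma> has_field_derivative K2 \<sigma> \<zeta>) (at \<zeta>)"
proof -
  define c where "c = complex_of_real (\<sigma>\<^sup>2)"
  have c0: "c \<noteq> 0" using assms by (simp add: c_def)
  have d1: "((\<lambda>\<zeta>. - (\<zeta> / c)) has_field_derivative - (1 / c)) (at \<zeta>)"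
    using c0 by (auto intro!: derivative_eq_intros)
  have "((\<lambda>\<zeta>. - (\<zeta> / c) * Kc \<sigma> \<zeta>) has_field_derivative (- (1 / c)) * Kc \<sigma> \<zeta> + K1 \<sigma> \<zeta> * (- (\<zeta> / c))) (at \<zeta>)"
    by (rule DERIV_mult[OF d1 Kc_deriv[OF assms]])
  moreover have "(- (1 / c)) * Kc \<sigma> \<zeta> + K1 \<sigma> \<zeta> * (- (\<zeta> / c)) = K2 \<sigma> \<zeta>"
  proof -
    have e1: "K1 \<sigma> \<zeta> = -(\<zeta>/c) * Kc \<sigma> \<zeta>" "K2 \<sigma> \<zeta> = (\<zeta>^2/c^2 - 1/c) * Kc \<sigma> \<zeta>"
      by (simp_all add: K1_def K2_def c_def)
    show ?thesis unfolding e1 using c0 by (simp add: field_simps power2_eq_square)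
  qed
  moreover have "(\<lambda>\<zeta>. - (\<zeta> / c) * Kc \<sigma> \<zeta>) = K1 \<sigma>" by (auto simp: K1_def c_def)
  ultimately show ?thesis by simp
qed

lemma norm_Kc: "cmod (Kc \<sigma> \<zeta>) = 1 / sqrt (2 * pi * \<sigma>\<^sup>2) * exp (((Im \<zeta>)\<^sup>2 - (Re \<zeta>)\<^sup>2) / (2 * \<sigma>\<^sup>2))"
proof -
  have "Re (- (\<zeta>\<^sup>2) / complex_of_real (2 * \<sigma>\<^sup>2)) = ((Im \<zeta>)\<^sup>2 - (Re \<zeta>)\<^sup>2) / (2 * \<sigma>\<^sup>2)"
    by (simp add: Re_divide_of_real Re_power2 diff_divide_distrib)
  moreover have "cmod (complex_of_real (1 / sqrt (2 * pi * \<sigma>\<^sup>2))) = 1 / sqrt (2 * pi * \<sigma>\<^sup>2)"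
    by (simp only: norm_of_real) simp
  ultimately show ?thesis unfolding Kc_def norm_mult norm_exp_eq_Re by simp
qed

lemma Kc_real: "Kc \<sigma> (complex_of_real s) = complex_of_real (normal_density 0 \<sigma> s)"
  unfolding Kc_def normal_density_def by (simp flip: exp_of_real add: power2_eq_square)

lemma norm_Kc_shift: "cmod (Kc \<sigma> (complex_of_real s - z)) = exp ((Im z)\<^sup>2 / (2 * \<sigma>\<^sup>2)) * normal_density (Re z) \<sigma> s"
  unfolding norm_Kc normal_density_def
  by (simp add: power2_eq_square exp_add[symmetric] diff_divide_distrib add_divide_distrib algebra_simps)


lemma K_taylor:
  assumes s0: "\<sigma> \<noteq> 0" and h: "cmod h \<le> 1"
    and B: "\<And>\<zeta>. \<zeta> \<in> cball p 1 \<Longrightarrow> cmod (K2 \<sigma> \<zeta>) \<le> B"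
  shows "cmod (Kc \<sigma> (p - h) - Kc \<sigma> p + K1 \<sigma> p * h) \<le> B * (cmod h)\<^sup>2"
proof -
  define f where "f i = (if i = 0 then Kc \<sigma> else if i = 1 then K1 \<sigma> else K2 \<sigma>)" for i :: nat
  have "cmod (f 0 (p - h) - (\<Sum>i\<le>1. f i p * ((p - h) - p) ^ i / (fact i))) \<le> B * cmod ((p - h) - p) ^ Suc 1 / fact 1"
  proof (rule complex_Taylor[of "cball p 1"])
    show "convex (cball p 1)" by simp
    show "(f i has_field_derivative f (Suc i) x) (at x within cball p 1)" if "i \<le> 1" for i x
      using that Kc_deriv[OF s0] K1_deriv[OF s0]
      by (auto simp: f_def le_Suc_eq intro: has_field_derivative_at_within)
    show "cmod (f (Suc 1) x) \<le> B" if "x \<in> cball p 1" for x using B[OF that] by (simp add: f_def)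
    show "p \<in> cball p 1" by simp
    show "p - h \<in> cball p 1" using h by (simp add: dist_norm)
  qed
  then show ?thesis by (simp add: f_def power2_eq_square algebra_simps)
qed

definition Mb :: "real \<Rightarrow> complex \<Rightarrow> real \<Rightarrow> real" where
  "Mb \<sigma> z s = sqrt 2 * exp (((\<bar>Im z\<bar> + 1)\<^sup>2 + 1) / (2 * \<sigma>\<^sup>2)) *
     ((2 * (s - Re z)\<^sup>2 + 2 + (\<bar>Im z\<bar> + 1)\<^sup>2) / \<sigma>\<^sup>2 ^ 2 + 1 / \<sigma>\<^sup>2) *
     normal_density (Re z) (sqrt 2 * \<sigma>) s"

lemma K2_bound:
  assumes s0: "\<sigma> > 0" and \<zeta>: "\<zeta> \<in> cball (complex_of_real s - z) 1"
  shows "cmod (K2 \<sigma> \<zeta>) \<le> Mb \<sigma> z s"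
proof -
  define a where "a = s - Re z"
  define r where "r = Re \<zeta>"
  define m where "m = Im \<zeta>"
  define q where "q = \<bar>Im z\<bar> + 1"
  define C where "C = 1 / sqrt (2 * pi * \<sigma>\<^sup>2)"
  have d: "cmod (\<zeta> - (complex_of_real s - z)) \<le> 1" using \<zeta> by (simp add: dist_norm norm_minus_commute)
  have ra: "\<bar>r - a\<bar> \<le> 1"
    using abs_Re_le_cmod[of "\<zeta> - (complex_of_real s - z)"] d by (simp add: r_def a_def)
  have mq: "\<bar>m\<bar> \<le> q"
    using abs_Im_le_cmod[of "\<zeta> - (complex_of_real s - z)"] d by (simp add: m_def q_def)
  have ra2: "(r - a)\<^sup>2 \<le> 1" using ra abs_le_square_iff[of "r - a" 1] by simp
  have q0: "0 \<le> q" by (simp add: q_def)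
  have m2: "m\<^sup>2 \<le> q\<^sup>2" using mq abs_le_square_iff[of m q] q0 by simp
  have r_lo: "a\<^sup>2 / 2 - 1 \<le> r\<^sup>2"
  proof -
    have "0 \<le> (2 * r - a)\<^sup>2" by simp
    then have "a\<^sup>2 \<le> 2 * r\<^sup>2 + 2 * (r - a)\<^sup>2" by (simp add: power2_eq_square algebra_simps)
    then show ?thesis using ra2 by simp
  qed
  have r_hi: "r\<^sup>2 \<le> 2 * a\<^sup>2 + 2"
  proof -
    have "0 \<le> (r - 2 * a)\<^sup>2" by simp
    then have "r\<^sup>2 \<le> 2 * a\<^sup>2 + 2 * (r - a)\<^sup>2" by (simp add: power2_eq_square algebra_simps)
    then show ?thesis using ra2 by simp
  qed
  have nK: "cmod (Kc \<sigma> \<zeta>) \<le> exp ((q\<^sup>2 + 1) / (2 * \<sigma>\<^sup>2)) * (C * exp (- a\<^sup>2 / (4 * \<sigma>\<^sup>2)))"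
  proof -
    have "(m\<^sup>2 - r\<^sup>2) / (2 * \<sigma>\<^sup>2) \<le> (q\<^sup>2 + 1) / (2 * \<sigma>\<^sup>2) + (- a\<^sup>2 / (4 * \<sigma>\<^sup>2))"
    proof -
      have "m\<^sup>2 - r\<^sup>2 \<le> q\<^sup>2 + 1 - a\<^sup>2 / 2" using m2 r_lo by simp
      then have "(m\<^sup>2 - r\<^sup>2) / (2 * \<sigma>\<^sup>2) \<le> (q\<^sup>2 + 1 - a\<^sup>2 / 2) / (2 * \<sigma>\<^sup>2)"
        using s0 by (intro divide_right_mono) auto
      also have "\<dots> = (q\<^sup>2 + 1) / (2 * \<sigma>\<^sup>2) + (- a\<^sup>2 / (4 * \<sigma>\<^sup>2))"
        using s0 by (simp add: field_simps)
      finally show ?thesis .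
    qed
    then have "exp ((m\<^sup>2 - r\<^sup>2) / (2 * \<sigma>\<^sup>2)) \<le> exp ((q\<^sup>2 + 1) / (2 * \<sigma>\<^sup>2)) * exp (- a\<^sup>2 / (4 * \<sigma>\<^sup>2))"
      by (simp flip: exp_add)
    moreover have "C \<ge> 0" by (simp add: C_def)
    ultimately show ?thesis unfolding norm_Kc C_def[symmetric] m_def[symmetric] r_def[symmetric]
      by (metis mult.left_commute mult_left_mono)
  qed
  have nd: "C * exp (- a\<^sup>2 / (4 * \<sigma>\<^sup>2)) = sqrt 2 * normal_density (Re z) (sqrt 2 * \<sigma>) s"
  proof -
    have "sqrt (2 * pi * (sqrt 2 * \<sigma>)\<^sup>2) = sqrt 2 * sqrt (2 * pi * \<sigma>\<^sup>2)"
      by (simp add: power_mult_distrib real_sqrt_mult[symmetric] mult_ac)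
    moreover have "(s - Re z)\<^sup>2 / (2 * (sqrt 2 * \<sigma>)\<^sup>2) = a\<^sup>2 / (4 * \<sigma>\<^sup>2)"
      by (simp add: a_def power_mult_distrib)
    ultimately show ?thesis
      unfolding normal_density_def C_def by (simp add: field_simps) (simp add: a_def)
  qed
  have np: "cmod (\<zeta>\<^sup>2 / (complex_of_real (\<sigma>\<^sup>2))\<^sup>2 - 1 / complex_of_real (\<sigma>\<^sup>2)) \<le>
      (2 * a\<^sup>2 + 2 + q\<^sup>2) / \<sigma>\<^sup>2 ^ 2 + 1 / \<sigma>\<^sup>2"
  proof -
    have "cmod (\<zeta>\<^sup>2 / (complex_of_real (\<sigma>\<^sup>2))\<^sup>2 - 1 / complex_of_real (\<sigma>\<^sup>2)) \<le>
        cmod (\<zeta>\<^sup>2 / (complex_of_real (\<sigma>\<^sup>2))\<^sup>2) + cmod (1 / complex_of_real (\<sigma>\<^sup>2))"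
      by (rule norm_triangle_ineq4)
    also have "cmod (\<zeta>\<^sup>2 / (complex_of_real (\<sigma>\<^sup>2))\<^sup>2) = (cmod \<zeta>)\<^sup>2 / \<sigma>\<^sup>2 ^ 2"
      by (simp add: norm_divide norm_power)
    also have "cmod (1 / complex_of_real (\<sigma>\<^sup>2)) = 1 / \<sigma>\<^sup>2"
      by (simp add: norm_divide norm_power)
    also have "(cmod \<zeta>)\<^sup>2 = r\<^sup>2 + m\<^sup>2" by (simp add: cmod_power2 r_def m_def)
    also have "(r\<^sup>2 + m\<^sup>2) / \<sigma>\<^sup>2 ^ 2 \<le> (2 * a\<^sup>2 + 2 + q\<^sup>2) / \<sigma>\<^sup>2 ^ 2"
      using r_hi m2 by (intro divide_right_mono) auto
    finally show ?thesis by simp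
  qed
  have "cmod (K2 \<sigma> \<zeta>) = cmod (\<zeta>\<^sup>2 / (complex_of_real (\<sigma>\<^sup>2))\<^sup>2 - 1 / complex_of_real (\<sigma>\<^sup>2)) * cmod (Kc \<sigma> \<zeta>)"
    by (simp add: K2_def norm_mult)
  also have "\<dots> \<le> ((2 * a\<^sup>2 + 2 + q\<^sup>2) / \<sigma>\<^sup>2 ^ 2 + 1 / \<sigma>\<^sup>2) * (exp ((q\<^sup>2 + 1) / (2 * \<sigma>\<^sup>2)) * (C * exp (- a\<^sup>2 / (4 * \<sigma>\<^sup>2))))"
    by (intro mult_mono np nK) auto
  also have "\<dots> = Mb \<sigma> z s"
    unfolding nd Mb_def by (simp add: a_def q_def mult_ac)
  finally show ?thesis .
qed

lemma int_cmul: "f integrable_on S \<Longrightarrow> (\<lambda>x. (c::real) * f x) integrable_on S"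
  using integrable_cmul[of f S c] by simp

lemma nd_int: assumes "0 < \<sigma>" shows "normal_density \<mu> \<sigma> integrable_on UNIV"
  "integral UNIV (normal_density \<mu> \<sigma>) = 1"
  using integrable_on_lborel[OF integrable_normal_density[OF assms]]
    integral_lborel[OF integrable_normal_density[OF assms]] integral_normal_density[OF assms] by auto

lemma nd_abs_int: assumes "0 < \<sigma>" shows "(\<lambda>s. normal_density \<mu> \<sigma> s * \<bar>s - \<mu>\<bar>) integrable_on UNIV"
  "integral UNIV (\<lambda>s. normal_density \<mu> \<sigma> s * \<bar>s - \<mu>\<bar>) = \<sigma> * sqrt (2 / pi)"
proof -
  have i: "integrable lborel (\<lambda>s. normal_density \<mu> \<sigma> s * \<bar>s - \<mu>\<bar>)"
    using integrable_normal_moment_abs[OF assms, of \<mu> 1] by simp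
  show "(\<lambda>s. normal_density \<mu> \<sigma> s * \<bar>s - \<mu>\<bar>) integrable_on UNIV" by (rule integrable_on_lborel[OF i])
  show "integral UNIV (\<lambda>s. normal_density \<mu> \<sigma> s * \<bar>s - \<mu>\<bar>) = \<sigma> * sqrt (2 / pi)"
    using integral_lborel[OF i] integral_normal_moment_abs_odd[OF assms, of \<mu> 0] by simp
qed

lemma nd_sq_int: assumes "0 < \<sigma>" shows "(\<lambda>s. normal_density \<mu> \<sigma> s * (s - \<mu>)\<^sup>2) integrable_on UNIV"
  using integrable_on_lborel[OF integrable_normal_moment[OF assms, of \<mu> 2]] by simp

lemma Mb_int: assumes "0 < \<sigma>" shows "Mb \<sigma> z integrable_on UNIV"
proof -
  define A where "A = sqrt 2 * exp (((\<bar>Im z\<bar> + 1)\<^sup>2 + 1) / (2 * \<sigma>\<^sup>2))"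
  define c1 where "c1 = A * (2 / \<sigma>\<^sup>2 ^ 2)"
  define c2 where "c2 = A * ((2 + (\<bar>Im z\<bar> + 1)\<^sup>2) / \<sigma>\<^sup>2 ^ 2 + 1 / \<sigma>\<^sup>2)"
  have s2: "0 < sqrt 2 * \<sigma>" using assms by simp
  have eq: "Mb \<sigma> z = (\<lambda>s. c1 * (normal_density (Re z) (sqrt 2 * \<sigma>) s * (s - Re z)\<^sup>2) +
      c2 * normal_density (Re z) (sqrt 2 * \<sigma>) s)"
    using assms by (intro ext) (simp add: Mb_def A_def c1_def c2_def field_simps)
  show ?thesis unfolding eq
    by (intro integrable_add int_cmul nd_sq_int nd_int s2)
qed

lemma continuous_Kc: assumes "0 < \<sigma>" shows "continuous_on UNIV (\<lambda>s::real. Kc \<sigma> (complex_of_real s - z))"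
  using assms unfolding Kc_def by (auto intro!: continuous_intros)

lemma continuous_K1: assumes "0 < \<sigma>" shows "continuous_on UNIV (\<lambda>s::real. K1 \<sigma> (complex_of_real s - z))"
  using assms unfolding K1_def by (auto intro!: continuous_intros continuous_Kc)

context cstar
begin

definition FF :: "real \<Rightarrow> (real \<Rightarrow> 'a) \<Rightarrow> complex \<Rightarrow> 'a" where
  "FF \<sigma> g z = integral UNIV (\<lambda>s. sc (Kc \<sigma> (complex_of_real s - z)) (g s))"

lemma sc_integrable_bound:
  fixes k :: "real \<Rightarrow> complex" and g :: "real \<Rightarrow> 'a" and G :: "real \<Rightarrow> real"
  assumes ck: "continuous_on UNIV k" and cg: "continuous_on UNIV g" and G: "G integrable_on UNIV"
    and le: "\<And>s. cmod (k s) * norm (g s) \<le> G s"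
  shows "(\<lambda>s. sc (k s) (g s)) integrable_on UNIV"
    "norm (integral UNIV (\<lambda>s. sc (k s) (g s))) \<le> integral UNIV G"
proof -
  have c: "continuous_on UNIV (\<lambda>s. sc (k s) (g s))"
    by (rule bounded_bilinear.continuous_on[OF bounded_bilinear_sc ck cg])
  show i: "(\<lambda>s. sc (k s) (g s)) integrable_on UNIV"
    by (rule dom_integrable[OF c G]) (simp add: norm_sc le)
  show "norm (integral UNIV (\<lambda>s. sc (k s) (g s))) \<le> integral UNIV G"
    by (rule integral_norm_bound_integral[OF i G]) (simp add: norm_sc le)
qed

lemma FF_int:
  assumes s0: "0 < \<sigma>" and cg: "continuous_on UNIV g" and eb: "0 \<le> \<eta>" "0 \<le> \<beta>"
    and gb: "\<And>s. norm (g s) \<le> \<eta> + \<beta> * \<bar>s\<bar>"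
  shows "(\<lambda>s. sc (Kc \<sigma> (complex_of_real s - z)) (g s)) integrable_on UNIV"
    "norm (FF \<sigma> g z) \<le> exp ((Im z)\<^sup>2 / (2 * \<sigma>\<^sup>2)) * (\<eta> + \<beta> * \<bar>Re z\<bar> + \<beta> * (\<sigma> * sqrt (2 / pi)))"
proof -
  define E where "E = exp ((Im z)\<^sup>2 / (2 * \<sigma>\<^sup>2))"
  define x where "x = Re z"
  define G where "G s = E * ((\<eta> + \<beta> * \<bar>x\<bar>) * normal_density x \<sigma> s + \<beta> * (normal_density x \<sigma> s * \<bar>s - x\<bar>))" for s
  have Gi: "G integrable_on UNIV" unfolding G_def[abs_def]
    by (intro int_cmul integrable_add nd_int nd_abs_int s0)
  have Gv: "integral UNIV G = E * (\<eta> + \<beta> * \<bar>x\<bar> + \<beta> * (\<sigma> * sqrt (2 / pi)))"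
  proof -
    have "integral UNIV G = E * ((\<eta> + \<beta> * \<bar>x\<bar>) * integral UNIV (normal_density x \<sigma>) +
       \<beta> * integral UNIV (\<lambda>s. normal_density x \<sigma> s * \<bar>s - x\<bar>))"
      unfolding G_def[abs_def]
      by (simp add: int_cmul nd_int nd_abs_int s0 Henstock_Kurzweil_Integration.integral_add
          integral_mult[symmetric] integrable_add)
    then show ?thesis using nd_int(2)[OF s0] nd_abs_int(2)[OF s0] by simp
  qed
  have le: "cmod (Kc \<sigma> (complex_of_real s - z)) * norm (g s) \<le> G s" for s
  proof -
    have nd0: "0 \<le> normal_density x \<sigma> s" by simp
    have E0: "0 \<le> E" by (simp add: E_def)
    have "norm (g s) \<le> \<eta> + \<beta> * \<bar>x\<bar> + \<beta> * \<bar>s - x\<bar>"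
    proof -
      have "\<bar>s\<bar> \<le> \<bar>x\<bar> + \<bar>s - x\<bar>" by simp
      then have "\<beta> * \<bar>s\<bar> \<le> \<beta> * (\<bar>x\<bar> + \<bar>s - x\<bar>)" using eb by (intro mult_left_mono) auto
      then show ?thesis using gb[of s] by (simp add: algebra_simps)
    qed
    then have "E * normal_density x \<sigma> s * norm (g s) \<le> E * normal_density x \<sigma> s * (\<eta> + \<beta> * \<bar>x\<bar> + \<beta> * \<bar>s - x\<bar>)"
      using nd0 E0 by (intro mult_left_mono) auto
    then show ?thesis unfolding norm_Kc_shift G_def E_def[symmetric] x_def[symmetric]
      by (simp add: algebra_simps)
  qed
  note r = sc_integrable_bound[OF continuous_Kc[OF s0] cg Gi le]
  show "(\<lambda>s. sc (Kc \<sigma> (complex_of_real s - z)) (g s)) integrable_on UNIV" by (rule r(1))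
  show "norm (FF \<sigma> g z) \<le> exp ((Im z)\<^sup>2 / (2 * \<sigma>\<^sup>2)) * (\<eta> + \<beta> * \<bar>Re z\<bar> + \<beta> * (\<sigma> * sqrt (2 / pi)))"
    using r(2) Gv by (simp add: FF_def E_def x_def)
qed


lemma FF_entire:
  assumes s0: "0 < \<sigma>" and cg: "continuous_on UNIV g" and gb: "\<And>s. norm (g s) \<le> Bg"
  shows "entire_fun sc (FF \<sigma> g)"
  unfolding entire_fun_def
proof
  fix z
  define Dk where "Dk s = - K1 \<sigma> (complex_of_real s - z)" for s
  define D where "D = integral UNIV (\<lambda>s. sc (Dk s) (g s))"
  define E where "E = exp ((Im z)\<^sup>2 / (2 * \<sigma>\<^sup>2))"
  define x where "x = Re z"
  have Bg0: "0 \<le> Bg" using gb[of 0] norm_ge_zero order_trans by blast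
  have int0: "(\<lambda>s. sc (Kc \<sigma> (complex_of_real s - w)) (g s)) integrable_on UNIV" for w
    using FF_int(1)[OF s0 cg Bg0 order_refl, of w] gb by simp
  have Di: "(\<lambda>s. sc (Dk s) (g s)) integrable_on UNIV"
  proof (rule sc_integrable_bound(1)[OF _ cg])
    show "continuous_on UNIV Dk" unfolding Dk_def by (intro continuous_intros continuous_K1 s0)
    define G where "G s = Bg * E / \<sigma>\<^sup>2 * (normal_density x \<sigma> s * \<bar>s - x\<bar> + \<bar>Im z\<bar> * normal_density x \<sigma> s)" for s
    show "G integrable_on UNIV" unfolding G_def[abs_def]
      by (intro int_cmul integrable_add nd_int nd_abs_int s0)
    show "cmod (Dk s) * norm (g s) \<le> G s" for s
    proof -
      define p where "p = complex_of_real s - z"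
      have cp: "cmod p \<le> \<bar>s - x\<bar> + \<bar>Im z\<bar>" using cmod_le[of p] by (simp add: p_def x_def)
      have "cmod (Dk s) = cmod p / \<sigma>\<^sup>2 * (E * normal_density x \<sigma> s)"
        unfolding Dk_def K1_def p_def[symmetric] using norm_Kc_shift[of \<sigma> s z]
        by (simp add: norm_mult norm_divide norm_power p_def E_def x_def)
      also have "\<dots> \<le> (\<bar>s - x\<bar> + \<bar>Im z\<bar>) / \<sigma>\<^sup>2 * (E * normal_density x \<sigma> s)"
        using cp by (intro mult_right_mono divide_right_mono) (auto simp: E_def)
      finally have "cmod (Dk s) * norm (g s) \<le> (\<bar>s - x\<bar> + \<bar>Im z\<bar>) / \<sigma>\<^sup>2 * (E * normal_density x \<sigma> s) * Bg"
        using gb[of s] by (intro mult_mono) (auto simp: E_def)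
      then show ?thesis by (simp add: G_def algebra_simps add_divide_distrib)
    qed
  qed
  define C where "C = Bg * integral UNIV (Mb \<sigma> z)"
  have key: "norm (sc (inverse h) (FF \<sigma> g (z + h) - FF \<sigma> g z) - D) \<le> cmod h * C"
    if h0: "h \<noteq> 0" and h1: "cmod h \<le> 1" for h
  proof -
    define A where "A s = sc (Kc \<sigma> (complex_of_real s - (z + h))) (g s) - sc (Kc \<sigma> (complex_of_real s - z)) (g s)" for s
    define Q where "Q s = (Kc \<sigma> (complex_of_real s - z - h) - Kc \<sigma> (complex_of_real s - z) + K1 \<sigma> (complex_of_real s - z) * h) / h" for s
    have Ai: "A integrable_on UNIV" unfolding A_def[abs_def] by (intro integrable_diff int0)
    have e1: "FF \<sigma> g (z + h) - FF \<sigma> g z = integral UNIV A"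
      unfolding FF_def A_def[abs_def] by (rule Henstock_Kurzweil_Integration.integral_diff[OF int0 int0, symmetric])
    have e2: "sc (inverse h) (integral UNIV A) = integral UNIV (\<lambda>s. sc (inverse h) (A s))"
      using integral_linear[OF Ai bounded_linear_sc2, of "inverse h"] by (simp add: o_def)
    have Ai2: "(\<lambda>s. sc (inverse h) (A s)) integrable_on UNIV"
      using integrable_linear[OF Ai bounded_linear_sc2, of "inverse h"] by (simp add: o_def)
    have e3: "integral UNIV (\<lambda>s. sc (inverse h) (A s)) - D = integral UNIV (\<lambda>s. sc (inverse h) (A s) - sc (Dk s) (g s))"
      unfolding D_def by (rule Henstock_Kurzweil_Integration.integral_diff[OF Ai2 Di, symmetric])
    have e4: "sc (inverse h) (A s) - sc (Dk s) (g s) = sc (Q s) (g s)" for s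
    proof -
      have "sc (inverse h) (A s) - sc (Dk s) (g s) =
          sc (inverse h * (Kc \<sigma> (complex_of_real s - (z + h)) - Kc \<sigma> (complex_of_real s - z)) - Dk s) (g s)"
        by (simp add: A_def sc_diff1 sc_diff2 sc_sc right_diff_distrib)
      also have "inverse h * (Kc \<sigma> (complex_of_real s - (z + h)) - Kc \<sigma> (complex_of_real s - z)) - Dk s = Q s"
        using h0 by (simp add: Q_def Dk_def field_simps diff_diff_eq)
      finally show ?thesis .
    qed
    have Qi: "(\<lambda>s. sc (Q s) (g s)) integrable_on UNIV"
      using integrable_diff[OF Ai2 Di] by (simp add: e4)
    have Gi: "(\<lambda>s. cmod h * (Bg * Mb \<sigma> z s)) integrable_on UNIV"
      by (intro int_cmul Mb_int s0)
    have le: "norm (sc (Q s) (g s)) \<le> cmod h * (Bg * Mb \<sigma> z s)" for s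
    proof -
      define p where "p = complex_of_real s - z"
      have t: "cmod (Kc \<sigma> (p - h) - Kc \<sigma> p + K1 \<sigma> p * h) \<le> Mb \<sigma> z s * (cmod h)\<^sup>2"
        by (rule K_taylor[OF _ h1]) (use s0 K2_bound[OF s0] in \<open>auto simp: p_def\<close>)
      have "cmod (Q s) = cmod (Kc \<sigma> (p - h) - Kc \<sigma> p + K1 \<sigma> p * h) / cmod h"
        by (simp add: Q_def p_def norm_divide)
      also have "\<dots> \<le> Mb \<sigma> z s * (cmod h)\<^sup>2 / cmod h"
        using t h0 by (intro divide_right_mono) auto
      also have "\<dots> = cmod h * Mb \<sigma> z s" using h0 by (simp add: power2_eq_square)
      finally have q: "cmod (Q s) \<le> cmod h * Mb \<sigma> z s" .
      have "cmod (Q s) * norm (g s) \<le> (cmod h * Mb \<sigma> z s) * Bg"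
        using q gb[of s] by (intro mult_mono) (auto intro: order_trans[OF norm_ge_zero q])
      then show ?thesis by (simp add: norm_sc mult_ac)
    qed
    have "norm (sc (inverse h) (FF \<sigma> g (z + h) - FF \<sigma> g z) - D) = norm (integral UNIV (\<lambda>s. sc (Q s) (g s)))"
      unfolding e1 e2 e3 e4 ..
    also have "\<dots> \<le> integral UNIV (\<lambda>s. cmod h * (Bg * Mb \<sigma> z s))"
      by (rule integral_norm_bound_integral[OF Qi Gi le])
    also have "\<dots> = cmod h * C"
      unfolding C_def using Mb_int[OF s0, of z]
      by (simp add: integral_mult[symmetric] int_cmul)
    finally show ?thesis .
  qed
  have ev: "eventually (\<lambda>h. norm (sc (inverse h) (FF \<sigma> g (z + h) - FF \<sigma> g z) - D) \<le> cmod h * C) (at 0)"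
    unfolding eventually_at by (intro exI[of _ 1]) (auto simp: dist_norm intro: key)
  have "((\<lambda>h::complex. cmod h * C) \<longlongrightarrow> cmod 0 * C) (at 0)"
    by (intro tendsto_intros)
  then have "((\<lambda>h::complex. cmod h * C) \<longlongrightarrow> 0) (at 0)" by simp
  from Lim_null_comparison[OF ev this]
  have "((\<lambda>h. sc (inverse h) (FF \<sigma> g (z + h) - FF \<sigma> g z)) \<longlongrightarrow> D) (at 0)"
    by (simp add: LIM_zero_iff)
  then show "\<exists>D. ((\<lambda>h. sc (inverse h) (FF \<sigma> g (z + h) - FF \<sigma> g z)) \<longlongrightarrow> D) (at 0)" by blast
qed

end

lemma finite_delta:
  fixes P :: "nat \<Rightarrow> real \<Rightarrow> bool"
  assumes "\<And>n. n < N \<Longrightarrow> \<exists>d>0. \<forall>s. \<bar>s\<bar> < d \<longrightarrow> P n s"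
  shows "\<exists>d>0. \<forall>n<N. \<forall>s. \<bar>s\<bar> < d \<longrightarrow> P n s"
  using assms
proof (induction N)
  case 0 then show ?case by (intro exI[of _ 1]) auto
next
  case (Suc N)
  obtain d1 where d1: "d1 > 0" "\<forall>n<N. \<forall>s. \<bar>s\<bar> < d1 \<longrightarrow> P n s" using Suc by auto
  obtain d2 where d2: "d2 > 0" "\<forall>s. \<bar>s\<bar> < d2 \<longrightarrow> P N s" using Suc.prems[of N] by auto
  show ?case using d1 d2 by (intro exI[of _ "min d1 d2"]) (auto simp: less_Suc_eq)
qed

context cstar
begin

lemma FF_diff:
  assumes "(\<lambda>s. sc (Kc \<sigma> (complex_of_real s - z)) (g1 s)) integrable_on UNIV"
    "(\<lambda>s. sc (Kc \<sigma> (complex_of_real s - z)) (g2 s)) integrable_on UNIV"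
  shows "FF \<sigma> (\<lambda>s. g1 s - g2 s) z = FF \<sigma> g1 z - FF \<sigma> g2 z"
  unfolding FF_def using Henstock_Kurzweil_Integration.integral_diff[OF assms]
  by (simp add: sc_diff2)

lemma FF_one: assumes "0 < \<sigma>" shows "FF \<sigma> (\<lambda>s. 1) 0 = 1"
proof -
  have "(normal_density 0 \<sigma> has_integral 1) UNIV"
    using nd_int[OF assms, of 0] by (metis has_integral_integrable_integral)
  from has_integral_scaleR_left[OF this, of 1]
  have "((\<lambda>s. normal_density 0 \<sigma> s *\<^sub>R (1::'a)) has_integral 1) UNIV" by simp
  moreover have "(\<lambda>s. sc (Kc \<sigma> (complex_of_real s - 0)) 1) = (\<lambda>s. normal_density 0 \<sigma> s *\<^sub>R (1::'a))"
    by (simp add: Kc_real sc_real)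
  ultimately show ?thesis unfolding FF_def by (simp add: integral_unique)
qed

lemma entire_mult_left:
  assumes "entire_fun sc f" shows "entire_fun sc (\<lambda>z. c * f z)"
  unfolding entire_fun_def
proof
  fix z
  obtain D where D: "((\<lambda>h. sc (inverse h) (f (z + h) - f z)) \<longlongrightarrow> D) (at 0)"
    using assms unfolding entire_fun_def by blast
  have "((\<lambda>h. c * sc (inverse h) (f (z + h) - f z)) \<longlongrightarrow> c * D) (at 0)"
    by (intro tendsto_mult_left D)
  moreover have "(\<lambda>h. c * sc (inverse h) (f (z + h) - f z)) = (\<lambda>h. sc (inverse h) (c * f (z + h) - c * f z))"
  proof (rule ext)
    fix h
    have e: "c * f (z + h) - c * f z = c * (f (z + h) - f z)" by (simp add: right_diff_distrib)
    show "c * sc (inverse h) (f (z + h) - f z) = sc (inverse h) (c * f (z + h) - c * f z)"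
      by (simp only: e sc_multR)
  qed
  ultimately show "\<exists>D. ((\<lambda>h. sc (inverse h) (c * f (z + h) - c * f z)) \<longlongrightarrow> D) (at 0)" by auto
qed

lemma cocycle_facts:
  assumes "cocycle st \<alpha> v" "\<alpha> 0 = id"
  shows "v 0 = 1" "\<And>t. norm (v t) = 1" "continuous_on UNIV v"
proof -
  from assms(1) have c: "continuous_on UNIV v" "\<And>t. unitary st (v t)" "\<And>s t. v s * \<alpha> s (v t) = v (s + t)"
    unfolding cocycle_def by auto
  show "continuous_on UNIV v" by (rule c(1))
  show "norm (v t) = 1" for t using c(2)[of t] unfolding unitary_def by (intro unitary_norm) auto
  have "v 0 * v 0 = v 0" using c(3)[of 0 0] assms(2) by simp
  then have "st (v 0) * (v 0 * v 0) = st (v 0) * v 0" by simp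
  then show "v 0 = 1" using c(2)[of 0] unfolding unitary_def by (simp add: mult.assoc[symmetric])
qed

lemma FF_shift:
  assumes s0: "0 < \<sigma>" and bl: "bounded_linear A"
    and Asc: "\<And>c x. A (sc c x) = sc c (A x)"
    and coc: "\<And>s. v t * A (v s) = v (t + s)"
    and cv: "continuous_on UNIV v" and nv: "\<And>s. norm (v s) = 1"
  shows "v t * A (FF \<sigma> v 0) = FF \<sigma> v (complex_of_real t)"
proof -
  have vb: "norm (v s) \<le> 1 + 0 * \<bar>s\<bar>" for s using nv[of s] by simp
  note I0 = FF_int(1)[OF s0 cv _ order_refl vb, of 0, simplified]
  note It = FF_int(1)[OF s0 cv _ order_refl vb, of "complex_of_real t", simplified]
  have "A (FF \<sigma> v 0) = integral UNIV (\<lambda>s. A (sc (Kc \<sigma> (complex_of_real s)) (v s)))"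
    unfolding FF_def using integral_linear[OF I0 bl] by (simp add: o_def)
  also have "\<dots> = integral UNIV (\<lambda>s. sc (Kc \<sigma> (complex_of_real s)) (A (v s)))" by (simp add: Asc)
  finally have e1: "A (FF \<sigma> v 0) = integral UNIV (\<lambda>s. sc (Kc \<sigma> (complex_of_real s)) (A (v s)))" .
  have I1: "(\<lambda>s. sc (Kc \<sigma> (complex_of_real s)) (A (v s))) integrable_on UNIV"
    using integrable_linear[OF I0 bl] by (simp add: o_def Asc)
  have "v t * A (FF \<sigma> v 0) = integral UNIV (\<lambda>s. v t * sc (Kc \<sigma> (complex_of_real s)) (A (v s)))"
    unfolding e1 using integral_linear[OF I1 bounded_linear_mult_right[of "v t"]] by (simp add: o_def)
  also have "\<dots> = integral UNIV (\<lambda>s. sc (Kc \<sigma> (complex_of_real s)) (v (s + t)))"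
    by (simp add: sc_multR[symmetric] coc add.commute)
  also have "\<dots> = FF \<sigma> v (complex_of_real t)"
  proof -
    have "((\<lambda>s. sc (Kc \<sigma> (complex_of_real s - complex_of_real t)) (v s)) has_integral FF \<sigma> v (complex_of_real t)) UNIV"
      unfolding FF_def using It by (simp add: has_integral_integrable_integral)
    from has_integral_UNIV_shift[OF this, of t]
    show ?thesis by (simp add: integral_unique)
  qed
  finally show ?thesis .
qed

end

theorem lemma2p2:
  fixes sc :: "complex \<Rightarrow> 'a::{real_normed_algebra_1,banach} \<Rightarrow> 'a"
    and st :: "'a \<Rightarrow> 'a"
    and \<alpha> :: "real \<Rightarrow> 'a \<Rightarrow> 'a"
    and u_inf :: "real \<Rightarrow> 'a"
    and u :: "nat \<Rightarrow> real \<Rightarrow> 'a"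
    and \<epsilon> :: real
  assumes "simple_cstar sc st"
    and "flow sc st \<alpha>"
    and "cocycle st \<alpha> u_inf"
    and "\<And>n. cocycle st \<alpha> (u n)"
    and "\<And>K. compact K \<Longrightarrow> uniform_limit K u u_inf sequentially"
    and "\<epsilon> > 0"
  shows "\<exists>w_inf wi_inf (w :: nat \<Rightarrow> 'a) (wi :: nat \<Rightarrow> 'a) V_inf (V :: nat \<Rightarrow> complex \<Rightarrow> 'a).
     w_inf * wi_inf = 1 \<and> wi_inf * w_inf = 1 \<and>
     (\<forall>n. w n * wi n = 1 \<and> wi n * w n = 1) \<and>
     w \<longlonglongrightarrow> w_inf \<and>
     norm (w_inf - 1) < \<epsilon> \<and> (\<forall>n. norm (w n - 1) < \<epsilon>) \<and>
     entire_fun sc V_inf \<and> (\<forall>n. entire_fun sc (V n)) \<and>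
     (\<forall>t::real. V_inf (complex_of_real t) = wi_inf * u_inf t * \<alpha> t w_inf) \<and>
     (\<forall>n. \<forall>t::real. V n (complex_of_real t) = wi n * u n t * \<alpha> t (w n)) \<and>
     (\<forall>z. (\<lambda>n. V n z) \<longlonglongrightarrow> V_inf z)"
proof -
  have cs: "cstar_algebra sc st" using assms(1) unfolding simple_cstar_def by blast
  interpret cstar sc st by unfold_locales (rule cs)
  have fl: "\<And>t. star_automorphism sc st (\<alpha> t)" "\<alpha> 0 = id"
    using assms(2) unfolding flow_def by auto
  have \<alpha>sc: "\<alpha> t (sc c x) = sc c (\<alpha> t x)" for t c x
    using fl(1)[of t] unfolding star_automorphism_def by blast
  have \<alpha>bl: "bounded_linear (\<alpha> t)" for t
  proof -
    have sa: "bij (\<alpha> t)" "\<And>x y. \<alpha> t (x + y) = \<alpha> t x + \<alpha> t y" "\<And>c x. \<alpha> t (sc c x) = sc c (\<alpha> t x)"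
      "\<And>x y. \<alpha> t (x * y) = \<alpha> t x * \<alpha> t y" "\<And>x. \<alpha> t (st x) = st (\<alpha> t x)"
      using fl(1)[of t] unfolding star_automorphism_def by auto
    obtain y where y: "\<alpha> t y = 1" using sa(1) by (metis bij_pointE)
    have "\<alpha> t 1 = \<alpha> t 1 * \<alpha> t y" using y by simp
    also have "\<dots> = 1" using sa(4)[of 1 y] y by simp
    finally have "\<alpha> t 1 = 1" .
    then show ?thesis by (intro star_hom_bounded sa)
  qed
  note cf_inf = cocycle_facts[OF assms(3) fl(2)]
  note cf = cocycle_facts[OF assms(4) fl(2)]
  have coc_inf: "\<And>s t. u_inf s * \<alpha> s (u_inf t) = u_inf (s + t)" using assms(3) unfolding cocycle_def by auto
  have coc: "\<And>n s t. u n s * \<alpha> s (u n t) = u n (s + t)" using assms(4) unfolding cocycle_def by auto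
  define e' where "e' = min \<epsilon> (1/2)"
  have e'0: "0 < e'" "e' \<le> \<epsilon>" "e' \<le> 1/2" using assms(6) by (auto simp: e'_def)
  have ul1: "uniform_limit {-1..1} u u_inf sequentially" by (rule assms(5)) simp
  have "eventually (\<lambda>n. \<forall>s\<in>{-1..1}. dist (u n s) (u_inf s) < e'/8) sequentially"
    using uniform_limitD[OF ul1, of "e'/8"] e'0 by simp
  then obtain N where "\<forall>n\<ge>N. \<forall>s\<in>{-1..1}. dist (u n s) (u_inf s) < e'/8"
    unfolding eventually_sequentially by blast
  then have N: "\<And>n s. n \<ge> N \<Longrightarrow> s \<in> {-1..1} \<Longrightarrow> dist (u n s) (u_inf s) < e'/8" by blast
  obtain d0 where d0: "d0 > 0" "\<And>s. \<bar>s\<bar> < d0 \<Longrightarrow> dist (u_inf s) 1 < e'/8"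
    using cf_inf(3) e'0 cf_inf(1) unfolding continuous_on_iff
    by (metis UNIV_I dist_real_def diff_zero zero_less_divide_iff zero_less_numeral)
  have "\<exists>d>0. \<forall>s. \<bar>s\<bar> < d \<longrightarrow> dist (u n s) 1 < e'/4" for n
    using cf(3)[of n] e'0 cf(1)[of n] unfolding continuous_on_iff
    by (metis UNIV_I dist_real_def diff_zero zero_less_divide_iff zero_less_numeral)
  then obtain d1 where d1: "d1 > 0" "\<And>n s. n < N \<Longrightarrow> \<bar>s\<bar> < d1 \<Longrightarrow> dist (u n s) 1 < e'/4"
    using finite_delta[of N "\<lambda>n s. dist (u n s) 1 < e'/4"] by metis
  define \<eta> where "\<eta> = min (min d0 d1) 1 / 2"
  have \<eta>0: "0 < \<eta>" using d0 d1 by (simp add: \<eta>_def)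
  have small_inf: "norm (u_inf s - 1) \<le> e'/4" if "\<bar>s\<bar> \<le> \<eta>" for s
  proof -
    have "\<bar>s\<bar> < d0" using that d0 d1 by (simp add: \<eta>_def)
    then have "norm (u_inf s - 1) < e'/8" using d0(2)[of s] by (simp add: dist_norm)
    then show ?thesis using norm_ge_zero[of "u_inf s - 1"] by linarith
  qed
  have small: "norm (u n s - 1) \<le> e'/4" if "\<bar>s\<bar> \<le> \<eta>" for n s
  proof (cases "n < N")
    case True
    have "\<bar>s\<bar> < d1" using that d0 d1 by (simp add: \<eta>_def)
    then have "norm (u n s - 1) < e'/4" using d1(2)[OF True] by (simp add: dist_norm)
    then show ?thesis by simp
  next
    case False
    have s1: "s \<in> {-1..1}" "\<bar>s\<bar> < d0" using that d0 d1 by (auto simp: \<eta>_def)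
    have "norm (u n s - 1) \<le> norm (u n s - u_inf s) + norm (u_inf s - 1)"
      by (rule norm_diff_triangle_ineq[of "u n s" "u_inf s" "u_inf s" 1, simplified])
    also have "\<dots> \<le> e'/8 + e'/8"
      using N[of n s] False s1 d0(2)[of s] by (intro add_mono) (auto simp: dist_norm)
    finally show ?thesis by simp
  qed
  have far: "norm (v s - 1) \<le> e'/4 + (2/\<eta>) * \<bar>s\<bar>"
    if nv: "\<And>s. norm (v s) = 1" and sm: "\<And>s. \<bar>s\<bar> \<le> \<eta> \<Longrightarrow> norm (v s - 1) \<le> e'/4" for v :: "real \<Rightarrow> 'a" and s
  proof (cases "\<bar>s\<bar> \<le> \<eta>")
    case True
    have "0 \<le> (2/\<eta>) * \<bar>s\<bar>" using \<eta>0 by simp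
    then show ?thesis using sm[OF True] by linarith
  next
    case False
    have "norm (v s - 1) \<le> norm (v s) + norm (1::'a)" by (rule norm_triangle_ineq4)
    also have "\<dots> = 2" using nv[of s] by simp
    also have "2 \<le> (2/\<eta>) * \<bar>s\<bar>" using False \<eta>0 by (simp add: field_simps)
    finally show ?thesis using e'0 by simp
  qed
  define \<sigma> where "\<sigma> = e' * \<eta> / 16"
  have s0: "0 < \<sigma>" using e'0 \<eta>0 by (simp add: \<sigma>_def)
  have sq: "sqrt (2 / pi) \<le> 1" using pi_gt3 by simp
  have int1: "(\<lambda>s. sc (Kc \<sigma> (complex_of_real s - z)) (v s)) integrable_on UNIV"
    if cv: "continuous_on UNIV v" and nv: "\<And>s. norm (v s) = 1" for v z
  proof -
    have vb: "norm (v s) \<le> 1 + 0 * \<bar>s\<bar>" for s using nv[of s] by simp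
    show ?thesis using FF_int(1)[OF s0 cv _ order_refl vb, of z] by simp
  qed
  have near1: "norm (FF \<sigma> v 0 - 1) < e'/2"
    if cv: "continuous_on UNIV v" and nv: "\<And>s. norm (v s) = 1"
      and sm: "\<And>s. \<bar>s\<bar> \<le> \<eta> \<Longrightarrow> norm (v s - 1) \<le> e'/4" for v
  proof -
    have c1: "continuous_on UNIV (\<lambda>s::real. (1::'a))" by simp
    have i1: "(\<lambda>s. sc (Kc \<sigma> (complex_of_real s - 0)) (1::'a)) integrable_on UNIV"
      using int1[OF c1, of 0] by simp
    have "FF \<sigma> v 0 - 1 = FF \<sigma> (\<lambda>s. v s - 1) 0"
      using FF_diff[OF int1[OF cv nv] i1] FF_one[OF s0] by simp
    also have "norm \<dots> \<le> exp ((Im 0)\<^sup>2 / (2 * \<sigma>\<^sup>2)) * (e'/4 + (2/\<eta>) * \<bar>Re 0\<bar> + (2/\<eta>) * (\<sigma> * sqrt (2 / pi)))"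
    proof (rule FF_int(2)[OF s0])
      show "continuous_on UNIV (\<lambda>s. v s - 1)" using cv by (intro continuous_on_diff continuous_on_const)
      show "0 \<le> e'/4" using e'0 by simp
      show "0 \<le> 2/\<eta>" using \<eta>0 by simp
      show "norm (v s - 1) \<le> e'/4 + 2/\<eta> * \<bar>s\<bar>" for s by (rule far[OF nv sm])
    qed
    also have "\<dots> = e'/4 + e'/8 * sqrt (2 / pi)" using \<eta>0 by (simp add: \<sigma>_def)
    also have "\<dots> < e'/2"
    proof -
      have "e'/8 * sqrt (2 / pi) \<le> e'/8 * 1" using sq e'0 by (intro mult_left_mono) auto
      then show ?thesis using e'0 by linarith
    qed
    finally show ?thesis .
  qed
  define w_inf where "w_inf = FF \<sigma> u_inf 0"
  define w where "w n = FF \<sigma> (u n) 0" for n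
  have nw_inf: "norm (w_inf - 1) < e'/2" unfolding w_inf_def
    by (rule near1[OF cf_inf(3) cf_inf(2) small_inf])
  have nw: "norm (w n - 1) < e'/2" for n unfolding w_def
    by (rule near1[OF cf(3) cf(2) small])
  have inv_ex: "\<exists>wi. x * wi = 1 \<and> wi * x = 1 \<and> norm wi \<le> 2" if "norm (x - 1) < e'/2" for x :: 'a
  proof -
    have n1: "norm (1 - x) \<le> 1/4" using that e'0 by (simp add: norm_minus_commute)
    then obtain wi where wi: "x * wi = 1" "wi * x = 1" "norm wi \<le> 1 / (1 - norm (1 - x))"
      using neumann[of x] by fastforce
    have "1 / (1 - norm (1 - x)) \<le> 2" using n1 by (simp add: field_simps)
    with wi show ?thesis by auto
  qed
  define wi_inf where "wi_inf = (SOME wi. w_inf * wi = 1 \<and> wi * w_inf = 1 \<and> norm wi \<le> 2)"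
  define wi where "wi n = (SOME wi. w n * wi = 1 \<and> wi * w n = 1 \<and> norm wi \<le> 2)" for n
  have wi_inf: "w_inf * wi_inf = 1" "wi_inf * w_inf = 1" "norm wi_inf \<le> 2"
    using someI_ex[OF inv_ex[OF nw_inf]] unfolding wi_inf_def by auto
  have wi: "w n * wi n = 1" "wi n * w n = 1" "norm (wi n) \<le> 2" for n
    using someI_ex[OF inv_ex[OF nw[of n]]] unfolding wi_def by auto
  have conv: "(\<lambda>n. FF \<sigma> (u n) z) \<longlonglongrightarrow> FF \<sigma> u_inf z" for z
  proof (rule LIMSEQ_I)
    fix r :: real assume r: "0 < r"
    define Ez where "Ez = exp ((Im z)\<^sup>2 / (2 * \<sigma>\<^sup>2))"
    define T where "T = \<bar>Re z\<bar> + \<sigma> * sqrt (2 / pi)"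
    have Ez0: "0 < Ez" by (simp add: Ez_def)
    have T0: "0 \<le> T" using s0 by (simp add: T_def)
    define R where "R = 4 * (Ez * (T + 1)) / r"
    define \<eta>2 where "\<eta>2 = r / (4 * Ez)"
    have R0: "0 < R" using Ez0 T0 r by (simp add: R_def)
    have \<eta>20: "0 < \<eta>2" using Ez0 r by (simp add: \<eta>2_def)
    have ulR: "uniform_limit {-R..R} u u_inf sequentially" by (rule assms(5)) simp
    have "eventually (\<lambda>n. \<forall>s\<in>{-R..R}. dist (u n s) (u_inf s) < \<eta>2) sequentially"
      using uniform_limitD[OF ulR \<eta>20] by simp
    then obtain M where "\<forall>n\<ge>M. \<forall>s\<in>{-R..R}. dist (u n s) (u_inf s) < \<eta>2"
      unfolding eventually_sequentially by blast
    then have M: "\<And>n s. n \<ge> M \<Longrightarrow> s \<in> {-R..R} \<Longrightarrow> dist (u n s) (u_inf s) < \<eta>2" by blast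
    show "\<exists>no. \<forall>n\<ge>no. norm (FF \<sigma> (u n) z - FF \<sigma> u_inf z) < r"
    proof (intro exI allI impI)
      fix n assume n: "M \<le> n"
      have bnd: "norm (u n s - u_inf s) \<le> \<eta>2 + (2/R) * \<bar>s\<bar>" for s
      proof (cases "\<bar>s\<bar> \<le> R")
        case True
        then have "s \<in> {-R..R}" by auto
        then have "norm (u n s - u_inf s) < \<eta>2" using M[OF n, of s] by (simp add: dist_norm)
        moreover have "0 \<le> (2/R) * \<bar>s\<bar>" using R0 by simp
        ultimately show ?thesis by linarith
      next
        case False
        have "norm (u n s - u_inf s) \<le> norm (u n s) + norm (u_inf s)" by (rule norm_triangle_ineq4)
        also have "\<dots> = 2" using cf(2) cf_inf(2) by simp
        also have "2 \<le> (2/R) * \<bar>s\<bar>" using False R0 by (simp add: field_simps)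
        finally show ?thesis using \<eta>20 by simp
      qed
      have cd: "continuous_on UNIV (\<lambda>s. u n s - u_inf s)"
        by (intro continuous_on_diff cf(3) cf_inf(3))
      have "FF \<sigma> (u n) z - FF \<sigma> u_inf z = FF \<sigma> (\<lambda>s. u n s - u_inf s) z"
        using FF_diff[OF int1[OF cf(3) cf(2)] int1[OF cf_inf(3) cf_inf(2)]] by simp
      also have "norm \<dots> \<le> Ez * (\<eta>2 + (2/R) * \<bar>Re z\<bar> + (2/R) * (\<sigma> * sqrt (2 / pi)))"
        unfolding Ez_def
        by (rule FF_int(2)[OF s0 cd]) (use \<eta>20 R0 bnd in \<open>simp_all add: less_imp_le\<close>)
      also have "\<dots> = Ez * \<eta>2 + Ez * (2/R) * T" by (simp add: T_def algebra_simps)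
      finally have nb: "norm (FF \<sigma> (u n) z - FF \<sigma> u_inf z) \<le> Ez * \<eta>2 + Ez * (2/R) * T" .
      have A: "Ez * \<eta>2 = r/4" using Ez0 by (simp add: \<eta>2_def)
      have B: "Ez * (2/R) * T < r/2"
      proof -
        have RR: "r * R = 4 * (Ez * (T + 1))" using r by (simp add: R_def)
        have X: "Ez * (2/R) * T * R = 2 * Ez * T" using R0 by (simp add: field_simps)
        have Y: "r/2 * R = 2 * (Ez * (T + 1))" using RR by simp
        have "Ez * (2/R) * T * R < r/2 * R" unfolding X Y using Ez0 by (simp add: algebra_simps)
        then show ?thesis by (simp only: mult_less_cancel_right_pos[OF R0])
      qed
      show "norm (FF \<sigma> (u n) z - FF \<sigma> u_inf z) < r" using nb A B r by linarith
    qed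
  qed
  have wconv: "w \<longlonglongrightarrow> w_inf" using conv[of 0] by (simp add: w_def[abs_def] w_inf_def)
  have wiconv: "wi \<longlonglongrightarrow> wi_inf"
  proof -
    have eq: "wi n - wi_inf = wi n * (w_inf - w n) * wi_inf" for n
    proof -
      have "wi n * (w_inf - w n) * wi_inf = wi n * (w_inf * wi_inf) - (wi n * w n) * wi_inf"
        by (simp add: algebra_simps)
      then show ?thesis using wi_inf wi by simp
    qed
    have le: "norm (wi n - wi_inf) \<le> 4 * norm (w n - w_inf)" for n
    proof -
      have "norm (wi n - wi_inf) \<le> norm (wi n) * norm (w_inf - w n) * norm wi_inf"
        unfolding eq by (metis norm_mult_ineq mult_right_mono norm_ge_zero order_trans)
      also have "\<dots> \<le> 2 * norm (w_inf - w n) * 2"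
        using wi wi_inf by (intro mult_mono) auto
      finally show ?thesis by (simp add: norm_minus_commute)
    qed
    have "(\<lambda>n. w n - w_inf) \<longlonglongrightarrow> 0" using wconv by (rule LIM_zero)
    then have "(\<lambda>n. norm (w n - w_inf)) \<longlonglongrightarrow> 0" by (rule tendsto_norm_zero)
    then have "(\<lambda>n. 4 * norm (w n - w_inf)) \<longlonglongrightarrow> 4 * 0" by (rule tendsto_mult_left)
    then have g: "(\<lambda>n. 4 * norm (w n - w_inf)) \<longlonglongrightarrow> 0" by simp
    have ev: "\<forall>\<^sub>F n in sequentially. norm (wi n - wi_inf) \<le> 4 * norm (w n - w_inf)"
      by (rule always_eventually) (use le in blast)
    have "(\<lambda>n. wi n - wi_inf) \<longlonglongrightarrow> 0" by (rule Lim_null_comparison[OF ev g])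
    then show ?thesis by (simp add: LIM_zero_iff)
  qed
  have ub: "norm (u n s) \<le> 1" for n s using cf(2) by simp
  have ub_inf: "norm (u_inf s) \<le> 1" for s using cf_inf(2) by simp
  show ?thesis
  proof (intro exI conjI allI)
    show "w_inf * wi_inf = 1" "wi_inf * w_inf = 1" by (fact wi_inf)+
    show "w n * wi n = 1" "wi n * w n = 1" for n by (fact wi)+
    show "w \<longlonglongrightarrow> w_inf" by (fact wconv)
    show "norm (w_inf - 1) < \<epsilon>" using nw_inf e'0 by simp
    show "norm (w n - 1) < \<epsilon>" for n using nw[of n] e'0 by simp
    show "entire_fun sc (\<lambda>z. wi_inf * FF \<sigma> u_inf z)"
      by (intro entire_mult_left FF_entire[OF s0 cf_inf(3) ub_inf])
    show "entire_fun sc (\<lambda>z. wi n * FF \<sigma> (u n) z)" for n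
      by (intro entire_mult_left FF_entire[OF s0 cf(3) ub])
    show "wi_inf * FF \<sigma> u_inf (complex_of_real t) = wi_inf * u_inf t * \<alpha> t w_inf" for t
      using FF_shift[OF s0 \<alpha>bl \<alpha>sc coc_inf cf_inf(3) cf_inf(2), of t]
      by (simp add: w_inf_def mult.assoc)
    show "wi n * FF \<sigma> (u n) (complex_of_real t) = wi n * u n t * \<alpha> t (w n)" for n t
      using FF_shift[OF s0 \<alpha>bl \<alpha>sc coc cf(3) cf(2), of n t]
      by (simp add: w_def mult.assoc)
    show "(\<lambda>n. wi n * FF \<sigma> (u n) z) \<longlonglongrightarrow> wi_inf * FF \<sigma> u_inf z" for z
      by (intro tendsto_mult wiconv conv)
  qed
qed

end
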